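(* Let $m$ be a positive integer and let $\mathcal Z$ be a three-class symmetric association scheme with adjacency matrices $A_0=I,A_1,A_2,A_3$ whose character table is $$P=\begin{bmatrix}1&m(m-1)&m(m+1)&(m-1)(m+1)\\1&m&0&-m-1\\1&0&-m&m-1\\1&-m&m&-1\end{bmatrix}.$$ Then $A_1$, $A_2$ and $A_3+A_0$ are incidence matrices of symmetric partial geometric designs with parameters $(v,k;\alpha,\beta)$ respectively $$\big(3m^2,\ m(m-1);\ \tfrac13m^2(m^2-3m+2),\ \tfrac13m^2(m^2-3m+5)\big),$$ $$\big(3m^2,\ m(m+1);\ \tfrac13m^2(m^2+3m+2),\ \tfrac13m^2(m^2+3m+5)\big),$$ $$\big(3m^2,\ m^2;\ \tfrac13m^2(m^2-1),\ \tfrac13m^2(m^2+2)\big).$$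
   Context: A three-class symmetric association scheme has symmetric $0/1$ adjacency matrices $A_0=I,A_1,A_2,A_3$ summing to the all-ones matrix $J$ with $A_iA_j=\sum_hp_{ij}^hA_h$. Its character table is the matrix $P$ with $P_{ij}=p_j(i)$, where $A_j=\sum_i p_j(i)E_i$ and $E_0=\frac1{|X|}J,E_1,E_2,E_3$ are the primitive idempotents of the Bose–Mesner algebra. A symmetric partial geometric design with parameters $(v,k;\alpha,\beta)$ is a design with $v$ points and $v$ blocks, each block of size $k$, each point in $k$ blocks, whose incidence matrix $N$ satisfies $NN^TN=\beta N+\alpha(J-N)$. *)

theory Defs
  imports "HOL-Analysis.Analysis"
begin

definition Jmat :: "real^'n^'n" where
  "Jmat = (\<chi> i j. 1)"

definition zero_one_matrix :: "real^'n^'n \<Rightarrow> bool" where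
  "zero_one_matrix M \<longleftrightarrow> (\<forall>i j. M $ i $ j = 0 \<or> M $ i $ j = 1)"

definition sym_assoc_scheme :: "nat \<Rightarrow> (nat \<Rightarrow> real^'n^'n) \<Rightarrow> bool" where
  "sym_assoc_scheme d A \<longleftrightarrow>
     A 0 = mat 1 \<and>
     (\<forall>i\<le>d. zero_one_matrix (A i) \<and> transpose (A i) = A i \<and> A i \<noteq> 0) \<and>
     (\<Sum>i\<le>d. A i) = Jmat \<and>
     (\<forall>i\<le>d. \<forall>j\<le>d. \<exists>p :: nat \<Rightarrow> real. A i ** A j = (\<Sum>h\<le>d. p h *\<^sub>R A h))"

text \<open>The Bose--Mesner algebra and its primitive idempotents E 0 = J/|X|, E 1, ..., E d:
  nonzero, pairwise orthogonal idempotents of the Bose--Mesner algebra summing to I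
  (these form the basis of primitive idempotents of the d+1 dimensional algebra).\<close>

definition bose_mesner :: "nat \<Rightarrow> (nat \<Rightarrow> real^'n^'n) \<Rightarrow> (real^'n^'n) set" where
  "bose_mesner d A = span (A ` {..d})"

definition primitive_idempotents ::
  "nat \<Rightarrow> (nat \<Rightarrow> real^'n^'n) \<Rightarrow> (nat \<Rightarrow> real^'n^'n) \<Rightarrow> bool" where
  "primitive_idempotents d A E \<longleftrightarrow>
     E 0 = (1 / real CARD('n)) *\<^sub>R Jmat \<and>
     (\<forall>i\<le>d. E i \<in> bose_mesner d A \<and> E i \<noteq> 0) \<and>
     (\<forall>i\<le>d. \<forall>j\<le>d. E i ** E j = (if i = j then E i else 0)) \<and>
     (\<Sum>i\<le>d. E i) = mat 1"

definition has_character_table ::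
  "nat \<Rightarrow> (nat \<Rightarrow> real^'n^'n) \<Rightarrow> (nat \<Rightarrow> nat \<Rightarrow> real) \<Rightarrow> bool" where
  "has_character_table d A P \<longleftrightarrow>
     (\<exists>E. primitive_idempotents d A E \<and>
          (\<forall>j\<le>d. A j = (\<Sum>i\<le>d. P i j *\<^sub>R E i)))"

definition charP :: "nat \<Rightarrow> nat \<Rightarrow> nat \<Rightarrow> real" where
  "charP m i j = (let r = real m in
     [[1, r*(r-1), r*(r+1), (r-1)*(r+1)],
      [1, r, 0, -r-1],
      [1, 0, -r, r-1],
      [1, -r, r, -1]] ! i ! j)"

text \<open>Symmetric partial geometric design with parameters (v,k;alpha,beta), given by its
  v x v incidence matrix N (points = rows, blocks = columns).\<close>

definition sym_partial_geometric_design ::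
  "real^'n^'n \<Rightarrow> nat \<Rightarrow> nat \<Rightarrow> real \<Rightarrow> real \<Rightarrow> bool" where
  "sym_partial_geometric_design N v k \<alpha> \<beta> \<longleftrightarrow>
     CARD('n) = v \<and> zero_one_matrix N \<and>
     (\<forall>j. (\<Sum>i\<in>UNIV. N $ i $ j) = real k) \<and>
     (\<forall>i. (\<Sum>j\<in>UNIV. N $ i $ j) = real k) \<and>
     N ** transpose N ** N = \<beta> *\<^sub>R N + \<alpha> *\<^sub>R (Jmat - N)"

end

theory Submission
  imports Defs
begin

lemma mm_radd: "((A::real^'n^'n) + B) ** C = A ** C + B ** C"
  by (vector matrix_matrix_mult_def sum.distrib[symmetric] field_simps)

lemma mm_scaleR_left: "((c::real) *\<^sub>R (A::real^'n^'n)) ** B = c *\<^sub>R (A ** B)"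
  by (vector matrix_matrix_mult_def sum_distrib_left field_simps)

lemma mm_scaleR_right: "(A::real^'n^'n) ** ((c::real) *\<^sub>R B) = c *\<^sub>R (A ** B)"
  by (vector matrix_matrix_mult_def sum_distrib_left field_simps)

lemma mm_sum_left: fixes f :: "'a \<Rightarrow> real^'n^'n" shows "(\<Sum>i\<in>I. f i) ** (B::real^'n^'n) = (\<Sum>i\<in>I. f i ** B)"
proof (induction I rule: infinite_finite_induct)
  case (insert x F)
  then show ?case using mm_radd[of "f x" "sum f F" B] by simp
qed auto

lemma mm_sum_right: "(B::real^'n^'n) ** (\<Sum>i\<in>I. f i) = (\<Sum>i\<in>I. B ** f i)"
  by (induction I rule: infinite_finite_induct) (auto simp: matrix_add_ldistrib)

lemma sum3: "(\<Sum>i\<le>(3::nat). f i) = f 0 + f 1 + f 2 + (f 3 :: 'a::comm_monoid_add)"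
  by (simp add: numeral_3_eq_3 numeral_2_eq_2 add.assoc)

lemma S_mult:
  fixes E :: "nat \<Rightarrow> real^'n^'n"
  assumes "\<forall>i\<le>d. \<forall>j\<le>d. E i ** E j = (if i = j then E i else 0)"
  shows "(\<Sum>i\<le>d. c i *\<^sub>R E i) ** (\<Sum>i\<le>d. e i *\<^sub>R E i) = (\<Sum>i\<le>d. (c i * e i) *\<^sub>R E i)"
proof -
  have "(\<Sum>i\<le>d. c i *\<^sub>R E i) ** (\<Sum>i\<le>d. e i *\<^sub>R E i)
      = (\<Sum>j\<le>d. \<Sum>i\<le>d. (c i * e j) *\<^sub>R (E i ** E j))"
    by (simp add: mm_sum_left mm_sum_right mm_scaleR_left mm_scaleR_right scaleR_sum_right mult.commute)
  also have "\<dots> = (\<Sum>i\<le>d. \<Sum>j\<le>d. (c i * e j) *\<^sub>R (E i ** E j))"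
    by (rule sum.swap)
  also have "\<dots> = (\<Sum>i\<le>d. \<Sum>j\<le>d. (if j = i then (c i * e i) *\<^sub>R E i else 0))"
    by (intro sum.cong refl) (use assms in auto)
  also have "\<dots> = (\<Sum>i\<le>d. (c i * e i) *\<^sub>R E i)"
    by (simp add: sum.delta)
  finally show ?thesis .
qed

lemma S_add:
  fixes E :: "nat \<Rightarrow> real^'n^'n"
  shows "(\<Sum>i\<le>d. c i *\<^sub>R E i) + (\<Sum>i\<le>d. e i *\<^sub>R E i) = (\<Sum>i\<le>d. (c i + e i) *\<^sub>R E i)"
  by (simp add: sum.distrib scaleR_add_left)

lemma S_scale:
  fixes E :: "nat \<Rightarrow> real^'n^'n"
  shows "a *\<^sub>R (\<Sum>i\<le>d. c i *\<^sub>R E i) = (\<Sum>i\<le>d. (a * c i) *\<^sub>R E i)"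
  by (simp add: scaleR_sum_right)

lemma S_diff:
  fixes E :: "nat \<Rightarrow> real^'n^'n"
  shows "(\<Sum>i\<le>d. c i *\<^sub>R E i) - (\<Sum>i\<le>d. e i *\<^sub>R E i) = (\<Sum>i\<le>d. (c i - e i) *\<^sub>R E i)"
  by (simp add: sum_subtractf scaleR_diff_left)


lemma transpose_add': "transpose ((A::real^'n^'n) + B) = transpose A + transpose B"
  by (vector transpose_def)

lemma design_generic:
  fixes E :: "nat \<Rightarrow> real^'n^'n" and N :: "real^'n^'n"
  assumes orth: "\<forall>i\<le>3. \<forall>j\<le>3. E i ** E j = (if i = j then E i else 0)"
    and JS: "Jmat = (\<Sum>i\<le>3. (if i = 0 then n else 0) *\<^sub>R E i)"
    and NS: "N = (\<Sum>i\<le>3. c i *\<^sub>R E i)"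
    and tr: "transpose N = N" and zo: "zero_one_matrix N"
    and c0: "c 0 = real k" and card: "CARD('n) = v"
    and cub: "\<forall>i\<le>3. c i ^ 3 = (\<beta> - \<alpha>) * c i + \<alpha> * (if i = 0 then n else 0)"
  shows "sym_partial_geometric_design N v k \<alpha> \<beta>"
proof -
  have NJ: "N ** Jmat = real k *\<^sub>R Jmat"
  proof -
    have "N ** Jmat = (\<Sum>i\<le>3. (c i * (if i = 0 then n else 0)) *\<^sub>R E i)"
      unfolding NS JS by (rule S_mult[OF orth])
    also have "\<dots> = (\<Sum>i\<le>3. (c 0 * (if i = 0 then n else 0)) *\<^sub>R E i)"
      by (intro sum.cong refl) auto
    also have "\<dots> = c 0 *\<^sub>R Jmat" unfolding JS by (simp add: S_scale)
    finally show ?thesis using c0 by simp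
  qed
  have JN: "Jmat ** N = real k *\<^sub>R Jmat"
  proof -
    have "Jmat ** N = (\<Sum>i\<le>3. ((if i = 0 then n else 0) * c i) *\<^sub>R E i)"
      unfolding NS JS by (rule S_mult[OF orth])
    also have "\<dots> = (\<Sum>i\<le>3. (c 0 * (if i = 0 then n else 0)) *\<^sub>R E i)"
      by (intro sum.cong refl) auto
    also have "\<dots> = c 0 *\<^sub>R Jmat" unfolding JS by (simp add: S_scale)
    finally show ?thesis using c0 by simp
  qed
  have rows: "\<forall>i. (\<Sum>j\<in>UNIV. N $ i $ j) = real k"
  proof
    fix i
    have "(N ** Jmat) $ i $ i = real k" using NJ by (simp add: Jmat_def)
    then show "(\<Sum>j\<in>UNIV. N $ i $ j) = real k" by (simp add: matrix_matrix_mult_def Jmat_def)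
  qed
  have cols: "\<forall>j. (\<Sum>i\<in>UNIV. N $ i $ j) = real k"
  proof
    fix j
    have "(Jmat ** N) $ j $ j = real k" using JN by (simp add: Jmat_def)
    then show "(\<Sum>i\<in>UNIV. N $ i $ j) = real k" by (simp add: matrix_matrix_mult_def Jmat_def)
  qed
  have "N ** transpose N ** N = (\<Sum>i\<le>3. (c i * c i * c i) *\<^sub>R E i)"
    unfolding tr unfolding NS by (simp add: S_mult[OF orth])
  also have "\<dots> = (\<Sum>i\<le>3. (\<beta> * c i + \<alpha> * ((if i = 0 then n else 0) - c i)) *\<^sub>R E i)"
  proof (intro sum.cong refl)
    fix i assume "i \<in> {..3::nat}"
    then have "c i ^ 3 = (\<beta> - \<alpha>) * c i + \<alpha> * (if i = 0 then n else 0)" using cub by auto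
    then have "c i * c i * c i = \<beta> * c i + \<alpha> * ((if i = 0 then n else 0) - c i)"
      by (simp add: power3_eq_cube algebra_simps)
    then show "(c i * c i * c i) *\<^sub>R E i = (\<beta> * c i + \<alpha> * ((if i = 0 then n else 0) - c i)) *\<^sub>R E i"
      by simp
  qed
  also have "\<dots> = \<beta> *\<^sub>R N + \<alpha> *\<^sub>R (Jmat - N)"
    unfolding NS JS by (simp add: S_scale S_diff S_add)
  finally show ?thesis
    unfolding sym_partial_geometric_design_def using card zo rows cols by auto
qed

lemma le3: "i \<le> (3::nat) \<Longrightarrow> i = 0 \<or> i = 1 \<or> i = 2 \<or> i = 3" by arith

lemma charP_vals:
  "charP m 0 0 = 1" "charP m 0 1 = real m * (real m - 1)" "charP m 0 2 = real m * (real m + 1)"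
  "charP m 0 3 = (real m - 1) * (real m + 1)"
  "charP m 1 0 = 1" "charP m 1 1 = real m" "charP m 1 2 = 0" "charP m 1 3 = - real m - 1"
  "charP m 2 0 = 1" "charP m 2 1 = 0" "charP m 2 2 = - real m" "charP m 2 3 = real m - 1"
  "charP m 3 0 = 1" "charP m 3 1 = - real m" "charP m 3 2 = real m" "charP m 3 3 = - 1"
  by (simp_all add: charP_def Let_def)

theorem theorem5p2:
  fixes m :: nat and A :: "nat \<Rightarrow> real^'n^'n"
  assumes "m > 0"
    and "sym_assoc_scheme 3 A"
    and "has_character_table 3 A (charP m)"
  shows "sym_partial_geometric_design (A 1) (3*m^2) (m*(m-1))
           (real m^2 * (real m^2 - 3*real m + 2) / 3) (real m^2 * (real m^2 - 3*real m + 5) / 3) \<and>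
         sym_partial_geometric_design (A 2) (3*m^2) (m*(m+1))
           (real m^2 * (real m^2 + 3*real m + 2) / 3) (real m^2 * (real m^2 + 3*real m + 5) / 3) \<and>
         sym_partial_geometric_design (A 3 + A 0) (3*m^2) (m^2)
           (real m^2 * (real m^2 - 1) / 3) (real m^2 * (real m^2 + 2) / 3)"
proof -
  obtain E where pi: "primitive_idempotents 3 A E"
    and AE: "\<forall>j\<le>3. A j = (\<Sum>i\<le>3. charP m i j *\<^sub>R E i)"
    using assms(3) unfolding has_character_table_def by blast
  have E0: "E 0 = (1 / real CARD('n)) *\<^sub>R Jmat" and nz: "E 0 \<noteq> 0"
    and orth: "\<forall>i\<le>3. \<forall>j\<le>3. E i ** E j = (if i = j then E i else 0)"
    using pi unfolding primitive_idempotents_def by auto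
  have sch: "A 0 = mat 1" "\<forall>i\<le>3. zero_one_matrix (A i) \<and> transpose (A i) = A i"
    "(\<Sum>i\<le>3. A i) = Jmat"
    using assms(2) unfolding sym_assoc_scheme_def by auto
  define n where "n = real CARD('n)"
  have npos: "n > 0" unfolding n_def by simp
  have JE0: "Jmat = n *\<^sub>R E 0" using E0 npos unfolding n_def by simp
  have JS: "Jmat = (\<Sum>i\<le>3. (if i = 0 then n else 0) *\<^sub>R E i)"
    using JE0 by (simp add: sum3)
  have A0: "A 0 = (\<Sum>i\<le>3. charP m i 0 *\<^sub>R E i)" and A1: "A 1 = (\<Sum>i\<le>3. charP m i 1 *\<^sub>R E i)"
    and A2: "A 2 = (\<Sum>i\<le>3. charP m i 2 *\<^sub>R E i)" and A3: "A 3 = (\<Sum>i\<le>3. charP m i 3 *\<^sub>R E i)"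
    using AE by auto
  have "Jmat = A 0 + A 1 + A 2 + A 3" using sch(3) by (simp add: sum3)
  also have "\<dots> = (\<Sum>i\<le>3. (charP m i 0 + charP m i 1 + charP m i 2 + charP m i 3) *\<^sub>R E i)"
    unfolding A0 A1 A2 A3 by (simp add: S_add)
  also have "\<dots> = (\<Sum>i\<le>3. (if i = 0 then real (3*m^2) else 0) *\<^sub>R E i)"
  proof (intro sum.cong refl)
    fix i assume "i \<in> {..3::nat}"
    then have "charP m i 0 + charP m i 1 + charP m i 2 + charP m i 3 = (if i = 0 then real (3*m^2) else 0)"
      by (auto dest!: le3 simp: charP_def Let_def algebra_simps power2_eq_square)
    then show "(charP m i 0 + charP m i 1 + charP m i 2 + charP m i 3) *\<^sub>R E i = (if i = 0 then real (3*m^2) else 0) *\<^sub>R E i"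
      by simp
  qed
  also have "\<dots> = (real (3*m^2)) *\<^sub>R E 0"
    by (simp add: sum3)
  finally have "n *\<^sub>R E 0 = (real (3*m^2)) *\<^sub>R E 0" using JE0 by simp
  then have "(n - real (3*m^2)) *\<^sub>R E 0 = 0" by (simp add: scaleR_diff_left)
  then have "n = real (3*m^2)" using nz by simp
  then have card: "CARD('n) = 3*m^2" unfolding n_def by (simp only: of_nat_eq_iff)
  have nv: "n = 3 * real m ^ 2" using \<open>n = real (3*m^2)\<close> by simp
  have m1: "real (m*(m-1)) = real m * (real m - 1)" using assms(1) by (simp add: of_nat_diff)
  have d1: "sym_partial_geometric_design (A 1) (3*m^2) (m*(m-1))
           (real m^2 * (real m^2 - 3*real m + 2) / 3) (real m^2 * (real m^2 - 3*real m + 5) / 3)"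
  proof (rule design_generic[OF orth JS A1])
    show "transpose (A 1) = A 1" "zero_one_matrix (A 1)" using sch(2) by auto
    show "charP m 0 1 = real (m*(m-1))" using m1 by (simp add: charP_def Let_def) linarith
    show "CARD('n) = 3*m^2" by (rule card)
    show "\<forall>i\<le>3. charP m i 1 ^ 3 = (real m^2 * (real m^2 - 3*real m + 5) / 3 - real m^2 * (real m^2 - 3*real m + 2) / 3) * charP m i 1 + real m^2 * (real m^2 - 3*real m + 2) / 3 * (if i = 0 then n else 0)"
      by (auto dest!: le3 simp: nv charP_def Let_def field_simps power2_eq_square power3_eq_cube)
  qed
  have d2: "sym_partial_geometric_design (A 2) (3*m^2) (m*(m+1))
           (real m^2 * (real m^2 + 3*real m + 2) / 3) (real m^2 * (real m^2 + 3*real m + 5) / 3)"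
  proof (rule design_generic[OF orth JS A2])
    show "transpose (A 2) = A 2" "zero_one_matrix (A 2)" using sch(2) by auto
    show "charP m 0 2 = real (m*(m+1))" by (simp add: charP_vals algebra_simps)
    show "CARD('n) = 3*m^2" by (rule card)
    show "\<forall>i\<le>3. charP m i 2 ^ 3 = (real m^2 * (real m^2 + 3*real m + 5) / 3 - real m^2 * (real m^2 + 3*real m + 2) / 3) * charP m i 2 + real m^2 * (real m^2 + 3*real m + 2) / 3 * (if i = 0 then n else 0)"
      by (auto dest!: le3 simp: nv charP_def Let_def field_simps power2_eq_square power3_eq_cube)
  qed
  have A30: "A 3 + A 0 = (\<Sum>i\<le>3. (charP m i 3 + 1) *\<^sub>R E i)"
  proof -
    have "A 0 = (\<Sum>i\<le>3. 1 *\<^sub>R E i)" unfolding A0 by (intro sum.cong refl) (auto dest!: le3 simp: charP_def Let_def)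
    then show ?thesis unfolding A3 by (simp only: S_add)
  qed
  have zo3: "zero_one_matrix (A 3 + A 0)"
    unfolding zero_one_matrix_def
  proof (intro allI)
    fix a b
    have z: "\<forall>i\<le>3. A i $ a $ b = 0 \<or> A i $ a $ b = 1" using sch(2) unfolding zero_one_matrix_def by auto
    have s: "A 0 $ a $ b + A 1 $ a $ b + A 2 $ a $ b + A 3 $ a $ b = 1"
      using arg_cong[OF sch(3), of "\<lambda>M. M $ a $ b"] by (simp add: sum3 Jmat_def)
    show "(A 3 + A 0) $ a $ b = 0 \<or> (A 3 + A 0) $ a $ b = 1"
    proof (cases "a = b")
      case True
      have z1: "A 1 $ a $ b \<ge> 0" and z2: "A 2 $ a $ b \<ge> 0" and z3: "A 3 $ a $ b \<ge> 0"
        using z[rule_format, of 1] z[rule_format, of 2] z[rule_format, of 3] by auto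
      have "A 0 $ a $ b = 1" using True sch(1) by (simp add: mat_def)
      then have "A 3 $ a $ b = 0" using s z1 z2 z3 by linarith
      then show ?thesis using \<open>A 0 $ a $ b = 1\<close> by simp
    next
      case False
      then show ?thesis using z sch(1) by (auto simp: mat_def)
    qed
  qed
  have d3: "sym_partial_geometric_design (A 3 + A 0) (3*m^2) (m^2)
           (real m^2 * (real m^2 - 1) / 3) (real m^2 * (real m^2 + 2) / 3)"
  proof (rule design_generic[OF orth JS A30])
    show "transpose (A 3 + A 0) = A 3 + A 0" using sch(2) by (auto simp: transpose_add')
    show "zero_one_matrix (A 3 + A 0)" by (rule zo3)
    show "charP m 0 3 + 1 = real (m^2)" by (simp add: charP_vals algebra_simps power2_eq_square)
    show "CARD('n) = 3*m^2" by (rule card)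
    show "\<forall>i\<le>3. (charP m i 3 + 1) ^ 3 = (real m^2 * (real m^2 + 2) / 3 - real m^2 * (real m^2 - 1) / 3) * (charP m i 3 + 1) + real m^2 * (real m^2 - 1) / 3 * (if i = 0 then n else 0)"
      by (auto dest!: le3 simp: nv charP_def Let_def field_simps power2_eq_square power3_eq_cube)
  qed
  show ?thesis using d1 d2 d3 by blast
qed

end
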